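(* If $L$ is a finite ranked lattice with at least two elements, then $\mathcal{M}(L,1)=0$.
   Context: For a finite ranked poset $\mathcal{P}$ with rank function $\mathrm{rk}$, let $\mathrm{rk}(\mathcal{P})$ be the maximum rank of an element and $\rho(x,y,z)=3\,\mathrm{rk}(\mathcal{P})-\mathrm{rk}(x)-\mathrm{rk}(y)-\mathrm{rk}(z)$. Let $\delta_3(x,y,z)=1$ if $x=y=z$ and $0$ otherwise, and let $J$ be the unique integer-valued function on triples $x\le y\le z$ of $\mathcal{P}$ with $\sum_{x\le a\le y\le b\le z}J(a,y,b)=\delta_3(x,y,z)$ for all $x\le y\le z$. Then $\mathcal{M}(\mathcal{P},t)=\sum_{x\le y\le z}J(x,y,z)\,t^{\rho(x,y,z)}$. *)

theory Defs
  imports "HOL-Computational_Algebra.Polynomial"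
begin

definition covers :: "'a::order \<Rightarrow> 'a \<Rightarrow> bool" where
  "covers x y \<longleftrightarrow> x < y \<and> \<not> (\<exists>z. x < z \<and> z < y)"

definition ranked :: "('a::order \<Rightarrow> nat) \<Rightarrow> bool" where
  "ranked rk \<longleftrightarrow> (\<forall>x. (\<forall>y. \<not> y < x) \<longrightarrow> rk x = 0) \<and>
                  (\<forall>x y. covers x y \<longrightarrow> rk y = rk x + 1)"

definition rank_of :: "('a::finite \<Rightarrow> nat) \<Rightarrow> nat" where
  "rank_of rk = Max (rk ` UNIV)"

definition rho :: "('a::finite \<Rightarrow> nat) \<Rightarrow> 'a \<Rightarrow> 'a \<Rightarrow> 'a \<Rightarrow> nat" where
  "rho rk x y z = 3 * rank_of rk - rk x - rk y - rk z"

definition triples :: "('a::order \<times> 'a \<times> 'a) set" where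
  "triples = {(x, y, z). x \<le> y \<and> y \<le> z}"

definition delta3 :: "'a \<Rightarrow> 'a \<Rightarrow> 'a \<Rightarrow> int" where
  "delta3 x y z = (if x = y \<and> y = z then 1 else 0)"

text \<open>Defining relation of J on triples x \<le> y \<le> z; J is normalised to 0 off triples
  so that it is uniquely determined as a function.\<close>
definition is_J :: "('a::order \<Rightarrow> 'a \<Rightarrow> 'a \<Rightarrow> int) \<Rightarrow> bool" where
  "is_J J \<longleftrightarrow>
     (\<forall>x y z. x \<le> y \<and> y \<le> z \<longrightarrow>
        (\<Sum>(a, b) \<in> {(a, b). x \<le> a \<and> a \<le> y \<and> y \<le> b \<and> b \<le> z}. J a y b) = delta3 x y z) \<and>
     (\<forall>x y z. \<not> (x \<le> y \<and> y \<le> z) \<longrightarrow> J x y z = 0)"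

definition Jfun :: "'a::order \<Rightarrow> 'a \<Rightarrow> 'a \<Rightarrow> int" where
  "Jfun = (THE J. is_J J)"

definition Mpoly :: "('a::{finite,order} \<Rightarrow> nat) \<Rightarrow> int poly" where
  "Mpoly rk = (\<Sum>(x, y, z) \<in> triples. monom (Jfun x y z) (rho rk x y z))"

end

theory Submission
  imports Defs
begin

function nuf :: "'a::{finite,order} \<Rightarrow> 'a \<Rightarrow> int" where
  "nuf y x = (if x = y then 1 else 0) - (\<Sum>a \<in> {a. x < a \<and> a \<le> y}. nuf y a)"
  by auto
termination
proof (relation "measure (\<lambda>(y,x). card {a::'a. x < a})")
  show "wf (measure (\<lambda>(y,x). card {a::'a. x < a}))" by simp
next
  fix y x a :: 'a
  assume "a \<in> {a. x < a \<and> a \<le> y}"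
  then have xa: "x < a" by simp
  have "{b. a < b} \<subset> {b. x < b}" using xa by (auto intro: less_trans)
  then have "card {b. a < b} < card {b. x < b}" by (simp add: psubset_card_mono)
  then show "((y, a), y, x) \<in> measure (\<lambda>(y,x). card {a::'a. x < a})" by simp
qed

function kaf :: "'a::{finite,order} \<Rightarrow> 'a \<Rightarrow> int" where
  "kaf y z = (if y = z then 1 else 0) - (\<Sum>b \<in> {b. y \<le> b \<and> b < z}. kaf y b)"
  by auto
termination
proof (relation "measure (\<lambda>(y,z). card {a::'a. a < z})")
  show "wf (measure (\<lambda>(y,z). card {a::'a. a < z}))" by simp
next
  fix y z b :: 'a
  assume "b \<in> {b. y \<le> b \<and> b < z}"
  then have xa: "b < z" by simp
  have "{a. a < b} \<subset> {a. a < z}" using xa by (auto intro: less_trans)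
  then have "card {a. a < b} < card {a. a < z}" by (simp add: psubset_card_mono)
  then show "((y, b), y, z) \<in> measure (\<lambda>(y,z). card {a::'a. a < z})" by simp
qed

declare nuf.simps[simp del] kaf.simps[simp del]

lemma nuf_sum:
  fixes x y :: "'a::{finite,order}"
  assumes "x \<le> y"
  shows "(\<Sum>a \<in> {a. x \<le> a \<and> a \<le> y}. nuf y a) = (if x = y then 1 else 0)"
proof -
  have "{a. x \<le> a \<and> a \<le> y} = insert x {a. x < a \<and> a \<le> y}"
    using assms by (auto simp: order.order_iff_strict)
  then have "(\<Sum>a \<in> {a. x \<le> a \<and> a \<le> y}. nuf y a) = nuf y x + (\<Sum>a \<in> {a. x < a \<and> a \<le> y}. nuf y a)"
    by (simp add: sum.insert)
  also have "\<dots> = (if x = y then 1 else 0)"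
    by (subst nuf.simps) simp
  finally show ?thesis .
qed

lemma kaf_sum:
  fixes y z :: "'a::{finite,order}"
  assumes "y \<le> z"
  shows "(\<Sum>b \<in> {b. y \<le> b \<and> b \<le> z}. kaf y b) = (if y = z then 1 else 0)"
proof -
  have "{b. y \<le> b \<and> b \<le> z} = insert z {b. y \<le> b \<and> b < z}"
    using assms by (auto simp: order.order_iff_strict)
  then have "(\<Sum>b \<in> {b. y \<le> b \<and> b \<le> z}. kaf y b) = kaf y z + (\<Sum>b \<in> {b. y \<le> b \<and> b < z}. kaf y b)"
    by (simp add: sum.insert)
  also have "\<dots> = (if y = z then 1 else 0)"
    by (subst kaf.simps) simp
  finally show ?thesis .
qed

definition J0 :: "'a::{finite,order} \<Rightarrow> 'a \<Rightarrow> 'a \<Rightarrow> int" where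
  "J0 x y z = (if x \<le> y \<and> y \<le> z then nuf y x * kaf y z else 0)"

lemma J0_is_J: "is_J (J0 :: 'a::{finite,order} \<Rightarrow> _)"
  unfolding is_J_def
proof (intro conjI allI impI)
  fix x y z :: 'a
  assume h: "x \<le> y \<and> y \<le> z"
  have eq: "{(a, b). x \<le> a \<and> a \<le> y \<and> y \<le> b \<and> b \<le> z} =
      {a. x \<le> a \<and> a \<le> y} \<times> {b. y \<le> b \<and> b \<le> z}" by auto
  have "(\<Sum>(a, b) \<in> {(a, b). x \<le> a \<and> a \<le> y \<and> y \<le> b \<and> b \<le> z}. J0 a y b)
      = (\<Sum>(a, b) \<in> {a. x \<le> a \<and> a \<le> y} \<times> {b. y \<le> b \<and> b \<le> z}. nuf y a * kaf y b)"
    unfolding eq by (rule sum.cong) (auto simp: J0_def)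
  also have "\<dots> = (\<Sum>a \<in> {a. x \<le> a \<and> a \<le> y}. nuf y a) * (\<Sum>b \<in> {b. y \<le> b \<and> b \<le> z}. kaf y b)"
    by (simp add: sum_product sum.cartesian_product)
  also have "\<dots> = delta3 x y z"
    using h by (simp add: nuf_sum kaf_sum delta3_def)
  finally show "(\<Sum>(a, b) \<in> {(a, b). x \<le> a \<and> a \<le> y \<and> y \<le> b \<and> b \<le> z}. J0 a y b) = delta3 x y z" .
next
  fix x y z :: 'a
  assume "\<not> (x \<le> y \<and> y \<le> z)"
  then show "J0 x y z = 0" unfolding J0_def by auto
qed

lemma isJ_sum:
  assumes "is_J J" "x \<le> y" "y \<le> z"
  shows "(\<Sum>(a, b) \<in> {(a, b). x \<le> a \<and> a \<le> y \<and> y \<le> b \<and> b \<le> z}. J a y b) = delta3 x y z"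
proof -
  have "\<forall>x y z. x \<le> y \<and> y \<le> z \<longrightarrow>
        (\<Sum>(a, b) \<in> {(a, b). x \<le> a \<and> a \<le> y \<and> y \<le> b \<and> b \<le> z}. J a y b) = delta3 x y z"
    using assms(1) unfolding is_J_def by (rule conjunct1)
  then show ?thesis using assms(2,3) by iprover
qed

lemma isJ_zero:
  assumes "is_J J" "\<not> (x \<le> y \<and> y \<le> z)"
  shows "J x y z = 0"
proof -
  have "\<forall>x y z. \<not> (x \<le> y \<and> y \<le> z) \<longrightarrow> J x y z = 0"
    using assms(1) unfolding is_J_def by (rule conjunct2)
  then show ?thesis using assms(2) by iprover
qed

lemma is_J_unique:
  fixes J1 J2 :: "'a::{finite,order} \<Rightarrow> 'a \<Rightarrow> 'a \<Rightarrow> int"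
  assumes "is_J J1" "is_J J2"
  shows "J1 = J2"
proof -
  have main: "\<And>n x y z. card {a. x \<le> a \<and> a \<le> y} + card {b. y \<le> b \<and> b \<le> z} = n
      \<Longrightarrow> J1 x y z = J2 x y z"
  proof -
    fix n
    show "\<And>x y z. card {a. x \<le> a \<and> a \<le> y} + card {b. y \<le> b \<and> b \<le> z} = n
      \<Longrightarrow> J1 x y z = J2 x y z"
    proof (induction n rule: less_induct)
      case (less n x y z)
      show ?case
      proof (cases "x \<le> y \<and> y \<le> z")
        case False
        then show ?thesis using isJ_zero[OF assms(1)] isJ_zero[OF assms(2)] by metis
      next
        case True
        define S where "S = {(a, b). x \<le> a \<and> a \<le> y \<and> y \<le> b \<and> b \<le> z}"
        have fin: "finite S" by simp
        have xz: "(x, z) \<in> S" using True by (simp add: S_def)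
        have rest: "J1 a y b = J2 a y b" if ab: "(a, b) \<in> S - {(x, z)}" for a b
        proof -
          have a1: "x \<le> a" "a \<le> y" "y \<le> b" "b \<le> z" "(a,b) \<noteq> (x,z)" using ab by (auto simp: S_def)
          have s1: "{c. a \<le> c \<and> c \<le> y} \<subseteq> {c. x \<le> c \<and> c \<le> y}" using a1 by (auto intro: order_trans)
          have s2: "{c. y \<le> c \<and> c \<le> b} \<subseteq> {c. y \<le> c \<and> c \<le> z}" using a1 by (auto intro: order_trans)
          have c1: "card {c. a \<le> c \<and> c \<le> y} \<le> card {c. x \<le> c \<and> c \<le> y}" using s1 by (simp add: card_mono)
          have c2: "card {c. y \<le> c \<and> c \<le> b} \<le> card {c. y \<le> c \<and> c \<le> z}" using s2 by (simp add: card_mono)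
          have "card {c. a \<le> c \<and> c \<le> y} < card {c. x \<le> c \<and> c \<le> y} \<or>
                card {c. y \<le> c \<and> c \<le> b} < card {c. y \<le> c \<and> c \<le> z}"
          proof (cases "a = x")
            case False
            then have "x \<notin> {c. a \<le> c \<and> c \<le> y}" using a1 by auto
            moreover have "x \<in> {c. x \<le> c \<and> c \<le> y}" using True by auto
            ultimately have "{c. a \<le> c \<and> c \<le> y} \<subset> {c. x \<le> c \<and> c \<le> y}" using s1 by blast
            then show ?thesis by (simp add: psubset_card_mono)
          next
            case tr: True
            then have "b \<noteq> z" using a1 by auto
            then have "z \<notin> {c. y \<le> c \<and> c \<le> b}" using a1 by auto
            moreover have "z \<in> {c. y \<le> c \<and> c \<le> z}" using True by auto
            ultimately have "{c. y \<le> c \<and> c \<le> b} \<subset> {c. y \<le> c \<and> c \<le> z}" using s2 by blast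
            then show ?thesis by (simp add: psubset_card_mono)
          qed
          then have "card {c. a \<le> c \<and> c \<le> y} + card {c. y \<le> c \<and> c \<le> b} < n"
            using c1 c2 less.prems by linarith
          then show ?thesis using less.IH by metis
        qed
        have "(\<Sum>(a, b) \<in> S. J1 a y b) = delta3 x y z" using isJ_sum[OF assms(1)] True unfolding S_def by blast
        moreover have "(\<Sum>(a, b) \<in> S. J2 a y b) = delta3 x y z" using isJ_sum[OF assms(2)] True unfolding S_def by blast
        moreover have "(\<Sum>(a, b) \<in> S. J1 a y b) = J1 x y z + (\<Sum>(a, b) \<in> S - {(x,z)}. J1 a y b)"
          using fin xz by (simp add: sum.remove)
        moreover have "(\<Sum>(a, b) \<in> S. J2 a y b) = J2 x y z + (\<Sum>(a, b) \<in> S - {(x,z)}. J2 a y b)"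
          using fin xz by (simp add: sum.remove)
        moreover have "(\<Sum>(a, b) \<in> S - {(x,z)}. J1 a y b) = (\<Sum>(a, b) \<in> S - {(x,z)}. J2 a y b)"
        proof (rule sum.cong[OF refl])
          fix p assume "p \<in> S - {(x,z)}"
          then show "(case p of (a, b) \<Rightarrow> J1 a y b) = (case p of (a, b) \<Rightarrow> J2 a y b)"
            by (cases p) (simp add: rest)
        qed
        ultimately show ?thesis by linarith
      qed
    qed
  qed
  show ?thesis
  proof (rule ext)
    fix x show "J1 x = J2 x"
    proof (rule ext)
      fix y show "J1 x y = J2 x y"
      proof (rule ext)
        fix z show "J1 x y z = J2 x y z" by (rule main[OF refl])
      qed
    qed
  qed
qed

lemma Jfun_is_J: "is_J (Jfun :: 'a::{finite,order} \<Rightarrow> _)"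
proof -
  have "is_J (THE J. is_J (J :: 'a \<Rightarrow> _))"
  proof (rule theI[of _ J0])
    show "is_J J0" by (rule J0_is_J)
  next
    fix J assume "is_J (J :: 'a \<Rightarrow> _)"
    then show "J = J0" using J0_is_J by (rule is_J_unique)
  qed
  then show ?thesis by (simp add: Jfun_def)
qed


theorem proposition6p4:
  fixes rk :: "'a::{finite, lattice} \<Rightarrow> nat"
  assumes "ranked rk"
    and "card (UNIV :: 'a set) \<ge> 2"
  shows "poly (Mpoly rk) 1 = 0"
proof -
  define J where "J = (Jfun :: 'a \<Rightarrow> 'a \<Rightarrow> 'a \<Rightarrow> int)"
  have JJ: "is_J J" unfolding J_def by (rule Jfun_is_J)
  have JZ: "\<And>x y z. J x y z \<noteq> 0 \<Longrightarrow> x \<le> y \<and> y \<le> z"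
    using isJ_zero[OF JJ] by blast
  define bt where "bt = Inf_fin (UNIV :: 'a set)"
  define tp where "tp = Sup_fin (UNIV :: 'a set)"
  have bt: "\<And>x. bt \<le> x" unfolding bt_def by (rule Inf_fin.coboundedI) auto
  have tp: "\<And>x. x \<le> tp" unfolding tp_def by (rule Sup_fin.coboundedI) auto
  have ne: "bt \<noteq> tp"
  proof
    assume "bt = tp"
    then have "\<And>x. x = bt" using bt tp by (metis order.antisym)
    then have "UNIV = {bt}" by auto
    then have "card (UNIV :: 'a set) = 1" by (metis card.empty card.insert empty_iff finite.emptyI One_nat_def)
    then show False using assms(2) by simp
  qed
  have "poly (Mpoly rk) 1 = (\<Sum>(x, y, z) \<in> triples. J x y z)"
    unfolding Mpoly_def J_def by (simp add: poly_sum poly_monom case_prod_beta)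
  also have "\<dots> = (\<Sum>(x, y, z) \<in> UNIV. J x y z)"
  proof (rule sum.mono_neutral_left)
    show "\<forall>p\<in>UNIV - triples. (case p of (x, y, z) \<Rightarrow> J x y z) = 0"
    proof
      fix p :: "'a \<times> 'a \<times> 'a" assume "p \<in> UNIV - triples"
      then show "(case p of (x, y, z) \<Rightarrow> J x y z) = 0"
      proof (cases p)
        case (fields x y z)
        then have "\<not> (x \<le> y \<and> y \<le> z)" using \<open>p \<in> UNIV - triples\<close> by (simp add: triples_def)
        then have "J x y z = 0" using JZ by blast
        then show ?thesis using fields by simp
      qed
    qed
  qed auto
  also have "\<dots> = (\<Sum>x\<in>UNIV. \<Sum>y\<in>UNIV. \<Sum>z\<in>UNIV. J x y z)"
    by (simp add: sum.cartesian_product[symmetric] UNIV_Times_UNIV[symmetric] del: UNIV_Times_UNIV)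
  also have "\<dots> = (\<Sum>y\<in>UNIV. \<Sum>x\<in>UNIV. \<Sum>z\<in>UNIV. J x y z)"
    by (rule sum.swap)
  also have "\<dots> = (\<Sum>y\<in>UNIV. delta3 bt y tp)"
  proof (rule sum.cong[OF refl])
    fix y
    have "(\<Sum>x\<in>UNIV. \<Sum>z\<in>UNIV. J x y z) = (\<Sum>(x, z)\<in>UNIV. J x y z)"
      by (simp add: sum.cartesian_product UNIV_Times_UNIV[symmetric] del: UNIV_Times_UNIV)
    also have "\<dots> = (\<Sum>(a, b) \<in> {(a, b). bt \<le> a \<and> a \<le> y \<and> y \<le> b \<and> b \<le> tp}. J a y b)"
    proof (rule sum.mono_neutral_right)
      show "\<forall>p\<in>UNIV - {(a, b). bt \<le> a \<and> a \<le> y \<and> y \<le> b \<and> b \<le> tp}. (case p of (a, b) \<Rightarrow> J a y b) = 0"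
      proof
        fix p :: "'a \<times> 'a" assume "p \<in> UNIV - {(a, b). bt \<le> a \<and> a \<le> y \<and> y \<le> b \<and> b \<le> tp}"
        then show "(case p of (a, b) \<Rightarrow> J a y b) = 0"
        proof (cases p)
          case (Pair a b)
          then have "\<not> (a \<le> y \<and> y \<le> b)" using \<open>p \<in> _\<close> bt tp by auto
          then have "J a y b = 0" using JZ by blast
          then show ?thesis using Pair by simp
        qed
      qed
    qed auto
    also have "\<dots> = delta3 bt y tp"
      using isJ_sum[OF JJ bt tp] .
    finally show "(\<Sum>x\<in>UNIV. \<Sum>z\<in>UNIV. J x y z) = delta3 bt y tp" .
  qed
  also have "\<dots> = 0"
    using ne by (intro sum.neutral) (auto simp: delta3_def)
  finally show ?thesis .
qed

end
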